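(* Consider a single indivisible item offered by a seller (player $0$) to $n\ge 2$ bidders with independent private values $\theta_i\in[\underline v,\bar v]$, each drawn from a common distribution $F$ that is common knowledge, strictly increasing in the interior of $[\underline v,\bar v]$ and continuously differentiable. A bidder $i$ who wins at price $t_i$ gets utility $\theta_i-t_i$; a losing bidder gets $0$. Three auction formats are considered: (i) the first-price auction (FP): the highest bidder wins and pays her own bid; (ii) the credible second-price auction (CSP): the highest bidder wins and pays the second-highest bid; (iii) the non-credible second-price auction (NCSP): after observing all bids, the seller picks a winner $y$ and a price $t_y\in[0,b_y]$, with utility $t_y-c(t_y-b_{(2)})$, where $b_{(2)}$ is the second-highest bid and $c$ is a differentiable convex function, strictly increasing for $x\ge0$, strictly decreasing for $x<0$, with $c(0)=0$ and $c'(0)\le 1$; bidders observe only whether they win and their own payment. In the NCSP auction the seller selects the highest bidder and charges $\min\{b_{(1)},b_{(2)}+\gamma\}$, where $b_{(1)}$ is the highest bid and $\gamma>0$ satisfies $c'(\gamma)=1$. Let $\mathbf{b^{FP}}$, $\mathbf{b^{NCSP}}$, $\mathbf{b^{CSP}}$ denote symmetric and strictly increasing equilibrium bidding functions (symmetric Perfect Bayesian equilibrium in undominated strategies) in the FP, NCSP and CSP auctions respectively. Then for each bidder $i$ and each value $\theta_i\in[\underline v,\bar v]$, $$\mathbb{E}\Big[\max_{j\ne i}\theta_j \,\Big|\, \max_{j\ne i}\theta_j<\theta_i\Big]=\mathbf{b^{FP}}(\theta_i)\le \mathbf{b^{NCSP}}(\theta_i)<\mathbf{b^{CSP}}(\t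heta_i)=\theta_i.$$
   Context: The NCSP seller behaviour described (choose the highest bidder, charge $\min\{b_{(1)},b_{(2)}+\gamma\}$) is the seller's equilibrium strategy in the model; bidders take it into account when choosing bids. *)

theory Defs
  imports "HOL-Analysis.Analysis"
begin

text \<open>Values lie in [vl, vh]. The common CDF F is extended to the whole real line by
  clamping, and the distribution of a single value is the Lebesgue-Stieltjes measure of F.\<close>

definition clamp :: "real \<Rightarrow> real \<Rightarrow> real \<Rightarrow> real" where
  "clamp vl vh x = max vl (min vh x)"

definition value_dist :: "real \<Rightarrow> real \<Rightarrow> (real \<Rightarrow> real) \<Rightarrow> real measure" where
  "value_dist vl vh F = interval_measure (\<lambda>x. F (clamp vl vh x))"

text \<open>Joint distribution of the values of the k = n - 1 opponents of a fixed bidder i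
  (independent, identically distributed), indexed by 0..<k.\<close>

definition others_dist :: "nat \<Rightarrow> real \<Rightarrow> real \<Rightarrow> (real \<Rightarrow> real) \<Rightarrow> (nat \<Rightarrow> real) measure" where
  "others_dist k vl vh F = PiM {..<k} (\<lambda>_. value_dist vl vh F)"

definition highest_other :: "nat \<Rightarrow> (nat \<Rightarrow> real) \<Rightarrow> real" where
  "highest_other k d = Max (d ` {..<k})"

definition win_prob :: "nat \<Rightarrow> real \<Rightarrow> (nat \<Rightarrow> real) \<Rightarrow> real" where
  "win_prob k b d =
     (if highest_other k d < b then 1
      else if b = highest_other k d then 1 / (1 + real (card {j\<in>{..<k}. d j = b}))
      else 0)"

text \<open>Utilities of bidder i with value th, own bid b, opponents' bids d.
  When i is a highest bidder, the highest opponent bid is the second-highest bid b_(2).\<close>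

definition util_FP :: "nat \<Rightarrow> real \<Rightarrow> real \<Rightarrow> (nat \<Rightarrow> real) \<Rightarrow> real" where
  "util_FP k th b d = win_prob k b d * (th - b)"

definition util_CSP :: "nat \<Rightarrow> real \<Rightarrow> real \<Rightarrow> (nat \<Rightarrow> real) \<Rightarrow> real" where
  "util_CSP k th b d = win_prob k b d * (th - highest_other k d)"

text \<open>NCSP: the seller (in its equilibrium behaviour) picks the highest bidder and
  charges min (b_(1)) (b_(2) + gamma).\<close>

definition util_NCSP :: "real \<Rightarrow> nat \<Rightarrow> real \<Rightarrow> real \<Rightarrow> (nat \<Rightarrow> real) \<Rightarrow> real" where
  "util_NCSP \<gamma> k th b d = win_prob k b d * (th - min b (highest_other k d + \<gamma>))"

definition expected_util ::
  "(real \<Rightarrow> real \<Rightarrow> (nat \<Rightarrow> real) \<Rightarrow> real) \<Rightarrow> nat \<Rightarrow> real \<Rightarrow> real \<Rightarrow> (real \<Rightarrow> real)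
   \<Rightarrow> (real \<Rightarrow> real) \<Rightarrow> real \<Rightarrow> real \<Rightarrow> real" where
  "expected_util u k vl vh F \<beta> th b =
     (\<integral>ths. u th b (\<lambda>j. \<beta> (clamp vl vh (ths j))) \<partial>others_dist k vl vh F)"

definition weakly_dominated ::
  "(real \<Rightarrow> real \<Rightarrow> (nat \<Rightarrow> real) \<Rightarrow> real) \<Rightarrow> nat \<Rightarrow> real \<Rightarrow> real \<Rightarrow> bool" where
  "weakly_dominated u k th b \<longleftrightarrow>
     (\<exists>b'\<ge>0. (\<forall>d. (\<forall>j<k. 0 \<le> d j) \<longrightarrow> u th b d \<le> u th b' d) \<and>
             (\<exists>d. (\<forall>j<k. 0 \<le> d j) \<and> u th b d < u th b' d))"

definition sym_equilibrium ::
  "(real \<Rightarrow> real \<Rightarrow> (nat \<Rightarrow> real) \<Rightarrow> real) \<Rightarrow> nat \<Rightarrow> real \<Rightarrow> real \<Rightarrow> (real \<Rightarrow> real)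
   \<Rightarrow> (real \<Rightarrow> real) \<Rightarrow> bool" where
  "sym_equilibrium u k vl vh F \<beta> \<longleftrightarrow>
     strict_mono_on {vl..vh} \<beta> \<and>
     (\<forall>th\<in>{vl..vh}. 0 \<le> \<beta> th) \<and>
     (\<forall>th\<in>{vl..vh}. \<forall>b\<ge>0. expected_util u k vl vh F \<beta> th b \<le> expected_util u k vl vh F \<beta> th (\<beta> th)) \<and>
     (\<forall>th\<in>{vl..vh}. \<not> weakly_dominated u k th (\<beta> th))"

definition cond_exp_max_below :: "nat \<Rightarrow> real \<Rightarrow> real \<Rightarrow> (real \<Rightarrow> real) \<Rightarrow> real \<Rightarrow> real" where
  "cond_exp_max_below k vl vh F th =
     (\<integral>ths. highest_other k ths * indicator {ths. highest_other k ths < th} ths \<partial>others_dist k vl vh F)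
     / measure (others_dist k vl vh F) {ths \<in> space (others_dist k vl vh F). highest_other k ths < th}"

end

theory Submission
  imports Defs "HOL-Probability.Probability"
begin


lemma envelope_unique:
  fixes U V G :: "real \<Rightarrow> real" and a b :: real
  assumes ab: "a \<le> b"
    and Gm: "\<And>x y. a \<le> x \<Longrightarrow> x \<le> y \<Longrightarrow> y \<le> b \<Longrightarrow> G x \<le> G y"
    and sU: "\<And>z t. a \<le> z \<Longrightarrow> z \<le> t \<Longrightarrow> t \<le> b \<Longrightarrow> (t-z) * G z \<le> U t - U z \<and> U t - U z \<le> (t-z) * G t"
    and sV: "\<And>z t. a \<le> z \<Longrightarrow> z \<le> t \<Longrightarrow> t \<le> b \<Longrightarrow> (t-z) * G z \<le> V t - V z \<and> V t - V z \<le> (t-z) * G t"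
    and init: "U a = V a"
  shows "U b = V b"
proof -
  define D where "D x = U x - V x" for x
  have key: "\<bar>D t - D z\<bar> \<le> (t - z) * (G t - G z)" if "a \<le> z" "z \<le> t" "t \<le> b" for z t
    using sU[OF that] sV[OF that] unfolding D_def by (auto simp: algebra_simps abs_if)
  define C where "C = (b - a) * (G b - G a)"
  have bnd: "real m * \<bar>D b - D a\<bar> \<le> C" if m: "m > 0" for m :: nat
  proof -
    define x where "x i = a + real i * (b - a) / real m" for i
    have x0: "x 0 = a" and xm: "x m = b" using m by (auto simp: x_def)
    have xi: "a \<le> x i" "x i \<le> x (Suc i)" "x (Suc i) \<le> b" if "i < m" for i
    proof -
      show "a \<le> x i" using ab m by (auto simp: x_def)
      have "real i * (b - a) / real m \<le> real (Suc i) * (b - a) / real m"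
        using ab by (intro divide_right_mono mult_right_mono) auto
      thus "x i \<le> x (Suc i)" by (simp add: x_def)
      have "real (Suc i) * (b - a) / real m \<le> real m * (b - a) / real m"
        using that ab by (intro divide_right_mono mult_right_mono) auto
      thus "x (Suc i) \<le> b" using m by (simp add: x_def)
    qed
    have dx: "x (Suc i) - x i = (b - a) / real m" for i by (simp add: x_def diff_divide_distrib[symmetric] add_divide_distrib[symmetric] algebra_simps)
    have "\<bar>D b - D a\<bar> = \<bar>\<Sum>i<m. D (x (Suc i)) - D (x i)\<bar>"
      by (subst sum_lessThan_telescope) (simp add: x0 xm)
    also have "\<dots> \<le> (\<Sum>i<m. \<bar>D (x (Suc i)) - D (x i)\<bar>)" by (rule sum_abs)
    also have "\<dots> \<le> (\<Sum>i<m. (b - a) / real m * (G (x (Suc i)) - G (x i)))"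
    proof (rule sum_mono)
      fix i assume "i \<in> {..<m}"
      hence "i < m" by simp
      from key[OF xi[OF this]] show "\<bar>D (x (Suc i)) - D (x i)\<bar> \<le> (b - a) / real m * (G (x (Suc i)) - G (x i))"
        by (simp only: dx)
    qed
    also have "\<dots> = (b - a) / real m * (G b - G a)"
      by (subst sum_distrib_left[symmetric], subst sum_lessThan_telescope) (simp add: x0 xm)
    finally have "\<bar>D b - D a\<bar> \<le> (b - a) / real m * (G b - G a)" .
    hence "real m * \<bar>D b - D a\<bar> \<le> real m * ((b - a) / real m * (G b - G a))"
      using m by (intro mult_left_mono) auto
    thus ?thesis using m by (simp add: C_def)
  qed
  have "\<bar>D b - D a\<bar> = 0"
  proof (rule ccontr)
    assume "\<bar>D b - D a\<bar> \<noteq> 0"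
    hence pos: "\<bar>D b - D a\<bar> > 0" by simp
    obtain m :: nat where "C / \<bar>D b - D a\<bar> < real m" using reals_Archimedean2 by blast
    hence "C < real m * \<bar>D b - D a\<bar>" using pos by (simp add: divide_less_eq)
    moreover have "m > 0" using \<open>C / \<bar>D b - D a\<bar> < real m\<close> pos bnd[of 1] by (cases m) (auto simp: C_def divide_less_eq)
    ultimately show False using bnd[of m] by linarith
  qed
  thus ?thesis using init by (simp add: D_def)
qed



lemma ho_const: "k \<ge> 1 \<Longrightarrow> highest_other k (\<lambda>_. c) = c"
  unfolding highest_other_def by (simp add: image_constant_conv lessThan_empty_iff)

lemma wp_lt: "highest_other k d < b \<Longrightarrow> win_prob k b d = 1" by (simp add: win_prob_def)
lemma wp_gt: "b < highest_other k d \<Longrightarrow> win_prob k b d = 0" by (simp add: win_prob_def)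
lemma wp_eq: "highest_other k d = b \<Longrightarrow> 0 < win_prob k b d \<and> win_prob k b d \<le> 1"
  by (simp add: win_prob_def divide_simps)

lemma CSP_truth:
  assumes k: "k \<ge> 1" and b0: "0 \<le> b" and th0: "0 \<le> th"
    and nd: "\<not> weakly_dominated (util_CSP k) k th b"
  shows "b = th"
proof (rule ccontr)
  assume ne: "b \<noteq> th"
  have le: "util_CSP k th b d \<le> util_CSP k th th d" for d
  proof -
    define Y where "Y = highest_other k d"
    consider "Y < b" | "Y = b" | "Y > b" by linarith
    thus ?thesis
    proof cases
      case 1
      show ?thesis
      proof (cases "Y < th")
        case True thus ?thesis using 1 by (simp add: util_CSP_def wp_lt Y_def)
      next
        case False
        have wb: "win_prob k b d = 1" using 1 by (simp add: wp_lt Y_def)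
        show ?thesis
        proof (cases "Y = th")
          case True thus ?thesis using wb by (simp add: util_CSP_def Y_def[symmetric])
        next
          case False
          hence "win_prob k th d = 0" using \<open>\<not> Y < th\<close> by (simp add: wp_gt Y_def)
          thus ?thesis using wb False \<open>\<not> Y < th\<close> by (simp add: util_CSP_def Y_def[symmetric])
        qed
      qed
    next
      case 2
      have w: "0 < win_prob k b d" "win_prob k b d \<le> 1" using wp_eq[of k d b] 2 by (auto simp: Y_def)
      show ?thesis
      proof (cases "Y < th")
        case True
        have "win_prob k b d * (th - Y) \<le> 1 * (th - Y)" using w True by (intro mult_right_mono) auto
        thus ?thesis using True by (simp add: util_CSP_def wp_lt Y_def[symmetric])
      next
        case False
        have "win_prob k th d \<ge> 0" by (simp add: win_prob_def)
        moreover have "win_prob k b d * (th - Y) \<le> 0" using w False by (simp add: mult_nonneg_nonpos)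
        moreover have "Y \<ge> th" using False by simp
        ultimately show ?thesis
          by (cases "Y = th") (auto simp: util_CSP_def Y_def[symmetric] wp_gt)
      qed
    next
      case 3
      have "win_prob k th d * (th - Y) \<ge> 0"
        by (cases "Y < th"; cases "Y = th") (auto simp: Y_def wp_lt wp_gt)
      thus ?thesis using 3 by (simp add: util_CSP_def wp_gt Y_def[symmetric])
    qed
  qed
  define c where "c = (b + th) / 2"
  have c0: "0 \<le> c" using b0 th0 by (simp add: c_def)
  have hoc: "highest_other k (\<lambda>_. c) = c" using ho_const[OF k] .
  have strict: "util_CSP k th b (\<lambda>_. c) < util_CSP k th th (\<lambda>_. c)"
  proof (cases "b < th")
    case True
    hence "b < c" "c < th" by (auto simp: c_def)
    thus ?thesis by (simp add: util_CSP_def hoc wp_lt wp_gt)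
  next
    case False
    hence "th < c" "c < b" using ne by (auto simp: c_def)
    thus ?thesis by (simp add: util_CSP_def hoc wp_lt wp_gt)
  qed
  have "weakly_dominated (util_CSP k) k th b"
    unfolding weakly_dominated_def
  proof (intro exI[of _ th] conjI allI impI)
    show "\<exists>d. (\<forall>j<k. 0 \<le> d j) \<and> util_CSP k th b d < util_CSP k th th d"
      using strict c0 by (intro exI[of _ "\<lambda>_. c"]) auto
  qed (use th0 le in auto)
  with nd show False by simp
qed

lemma NCSP_below:
  assumes k: "k \<ge> 1" and b0: "0 \<le> b" and th0: "0 < th" and g: "\<gamma> > 0"
    and nd: "\<not> weakly_dominated (util_NCSP \<gamma> k) k th b"
  shows "b < th"
proof (rule ccontr)
  assume "\<not> b < th"
  hence bth: "th \<le> b" by simp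
  define b' where "b' = (if b = th then max (th - \<gamma>/2) (th/2) else th)"
  have b'0: "0 \<le> b'" using th0 by (auto simp: b'_def)
  have le: "util_NCSP \<gamma> k th b d \<le> util_NCSP \<gamma> k th b' d" for d
  proof -
    define Y where "Y = highest_other k d"
    show ?thesis
    proof (cases "b = th")
      case True
      have bb: "b' < th" "th - \<gamma> < b'" "0 \<le> b'" using th0 g True by (auto simp: b'_def)
      consider "Y < b'" | "Y = b'" | "b' < Y" "Y < th" | "Y = th" | "th < Y" by linarith
      thus ?thesis
      proof cases
        case 1
        have "th - min th (Y + \<gamma>) \<le> th - min b' (Y + \<gamma>)" using bb by auto
        thus ?thesis using 1 True bb by (simp add: util_NCSP_def wp_lt Y_def[symmetric])
      next
        case 2
        have w: "0 < win_prob k b' d" using wp_eq[of k d b'] 2 by (auto simp: Y_def)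
        have "win_prob k b' d * (th - min b' (Y + \<gamma>)) \<ge> 0" using w 2 bb g by auto
        moreover have "th - min th (Y + \<gamma>) = 0" using 2 bb by auto
        ultimately show ?thesis using 2 True bb by (simp add: util_NCSP_def wp_lt Y_def[symmetric])
      next
        case 3
        thus ?thesis using True bb by (simp add: util_NCSP_def wp_lt wp_gt Y_def[symmetric])
      next
        case 4
        thus ?thesis using True bb g by (simp add: util_NCSP_def wp_gt Y_def[symmetric])
      next
        case 5
        thus ?thesis using True bb by (simp add: util_NCSP_def wp_gt Y_def[symmetric])
      qed
    next
      case False
      hence b'e: "b' = th" and lt: "th < b" using bth by (auto simp: b'_def)
      consider "Y < th" | "Y = th" | "th < Y" "Y \<le> b" | "b < Y" by linarith
      thus ?thesis
      proof cases
        case 1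
        have "th - min b (Y + \<gamma>) \<le> th - min th (Y + \<gamma>)" using lt by auto
        thus ?thesis using 1 lt b'e by (simp add: util_NCSP_def wp_lt Y_def[symmetric])
      next
        case 2
        have "win_prob k b d * (th - min b (Y + \<gamma>)) \<le> 0"
          using 2 lt g by (intro mult_nonneg_nonpos) (auto simp: win_prob_def)
        thus ?thesis using 2 b'e g by (simp add: util_NCSP_def Y_def[symmetric])
      next
        case 3
        have w: "0 \<le> win_prob k b d" by (simp add: win_prob_def)
        have "win_prob k b d * (th - min b (Y + \<gamma>)) \<le> 0"
          using 3 lt g w by (intro mult_nonneg_nonpos) auto
        thus ?thesis using 3 b'e by (simp add: util_NCSP_def wp_gt Y_def[symmetric])
      next
        case 4
        thus ?thesis using lt b'e by (simp add: util_NCSP_def wp_gt Y_def[symmetric])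
      qed
    qed
  qed
  have strict: "\<exists>d. (\<forall>j<k. 0 \<le> d j) \<and> util_NCSP \<gamma> k th b d < util_NCSP \<gamma> k th b' d"
  proof (cases "b = th")
    case True
    have bb: "b' < th" "th - \<gamma> < b'" "0 \<le> b'" using th0 g True by (auto simp: b'_def)
    have w: "0 < win_prob k b' (\<lambda>_. b')" using wp_eq[of k "\<lambda>_. b'" b'] ho_const[OF k] by auto
    have "util_NCSP \<gamma> k th b (\<lambda>_. b') = 0" using True bb by (simp add: util_NCSP_def ho_const[OF k] wp_lt)
    moreover have "util_NCSP \<gamma> k th b' (\<lambda>_. b') > 0" using w bb g by (simp add: util_NCSP_def ho_const[OF k])
    ultimately show ?thesis using bb by (intro exI[of _ "\<lambda>_. b'"]) auto
  next
    case False
    hence b'e: "b' = th" and lt: "th < b" using bth by (auto simp: b'_def)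
    define c where "c = (th + b)/2"
    have c: "th < c" "c < b" "0 \<le> c" using lt th0 by (auto simp: c_def)
    have "util_NCSP \<gamma> k th b (\<lambda>_. c) < 0" using c g by (simp add: util_NCSP_def ho_const[OF k] wp_lt)
    moreover have "util_NCSP \<gamma> k th b' (\<lambda>_. c) = 0" using c b'e by (simp add: util_NCSP_def ho_const[OF k] wp_gt)
    ultimately show ?thesis using c by (intro exI[of _ "\<lambda>_. c"]) auto
  qed
  have "weakly_dominated (util_NCSP \<gamma> k) k th b"
    unfolding weakly_dominated_def
    by (intro exI[of _ b'] conjI allI impI) (use b'0 le strict in auto)
  with nd show False by simp
qed



locale auc =
  fixes vl vh :: real and F :: "real \<Rightarrow> real" and k :: nat
  assumes vl0: "0 \<le> vl" and vlh: "vl < vh"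
    and F_lo: "F vl = 0" and F_hi: "F vh = 1"
    and F_strict: "strict_mono_on {vl<..<vh} F"
    and F_cont: "continuous_on {vl..vh} F"
    and k1: "1 \<le> k"
begin

lemma F_le_left:
  assumes "vl \<le> x" "x < m" "m < vh" shows "F x \<le> F m"
proof (rule ccontr)
  assume "\<not> F x \<le> F m"
  hence e: "F x - F m > 0" by simp
  have "x \<in> {vl..vh}" using assms by auto
  from F_cont[unfolded continuous_on_iff, rule_format, OF this e]
  obtain d where d: "d > 0" "\<And>u. u \<in> {vl..vh} \<Longrightarrow> dist u x < d \<Longrightarrow> dist (F u) (F x) < F x - F m" by blast
  define u where "u = min (x + d/2) ((x+m)/2)"
  have u0: "u \<le> x + d/2" "x < u" "u < m" using d(1) assms unfolding u_def by (auto simp: min_def)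
  have u: "x < u" "u < m" "u \<in> {vl..vh}" "dist u x < d" using u0 d(1) assms by (auto simp: dist_real_def)
  have "F u < F m" using F_strict u assms by (auto simp: strict_mono_on_def)
  moreover have "dist (F u) (F x) < F x - F m" using d(2) u by auto
  ultimately show False by (auto simp: dist_real_def)
qed

lemma F_le_right:
  assumes "vl < m" "m < y" "y \<le> vh" shows "F m \<le> F y"
proof (rule ccontr)
  assume "\<not> F m \<le> F y"
  hence e: "F m - F y > 0" by simp
  have "y \<in> {vl..vh}" using assms by auto
  from F_cont[unfolded continuous_on_iff, rule_format, OF this e]
  obtain d where d: "d > 0" "\<And>u. u \<in> {vl..vh} \<Longrightarrow> dist u y < d \<Longrightarrow> dist (F u) (F y) < F m - F y" by blast
  define u where "u = max (y - d/2) ((y+m)/2)"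
  have u0: "y - d/2 \<le> u" "m < u" "u < y" using d(1) assms unfolding u_def by (auto simp: max_def)
  have u: "m < u" "u < y" "u \<in> {vl..vh}" "dist u y < d" using u0 d(1) assms by (auto simp: dist_real_def)
  have "F m < F u" using F_strict u assms by (auto simp: strict_mono_on_def)
  moreover have "dist (F u) (F y) < F m - F y" using d(2) u by auto
  ultimately show False by (auto simp: dist_real_def)
qed

lemma F_mono: assumes "vl \<le> x" "x \<le> y" "y \<le> vh" shows "F x \<le> F y"
proof (cases "x = y")
  case False
  define m where "m = (x+y)/2"
  have "x < m" "m < y" using False assms by (auto simp: m_def)
  then show ?thesis using F_le_left[of x m] F_le_right[of m y] assms by linarith
qed simp

lemma F_pos: assumes "vl < m" "m \<le> vh" shows "F m > 0"
proof -
  define u where "u = (vl + m)/2"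
  have "vl < u" "u < m" using assms by (auto simp: u_def)
  have "F vl \<le> F u" using F_mono[of vl u] \<open>u < m\<close> \<open>vl < u\<close> assms by auto
  moreover have "F u < F m"
  proof (cases "m = vh")
    case True
    define w where "w = (u + m)/2"
    have "u < w" "w < m" using \<open>u < m\<close> by (auto simp: w_def)
    hence "F u < F w" using F_strict \<open>vl < u\<close> True by (auto simp: strict_mono_on_def)
    moreover have "F w \<le> F m" using F_mono[of w m] \<open>vl < u\<close> \<open>u < w\<close> \<open>w < m\<close> assms by auto
    ultimately show ?thesis by simp
  next
    case False
    thus ?thesis using F_strict \<open>vl < u\<close> \<open>u < m\<close> assms by (auto simp: strict_mono_on_def)
  qed
  ultimately show ?thesis using F_lo by simp
qed

definition Fc where "Fc x = F (clamp vl vh x)"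

lemma clamp_in: "clamp vl vh x \<in> {vl..vh}" using vlh by (auto simp: clamp_def)
lemma clamp_id: "x \<in> {vl..vh} \<Longrightarrow> clamp vl vh x = x" by (auto simp: clamp_def)
lemma clamp_mono: "x \<le> y \<Longrightarrow> clamp vl vh x \<le> clamp vl vh y" by (auto simp: clamp_def)

lemma Fc_mono: "x \<le> y \<Longrightarrow> Fc x \<le> Fc y"
  unfolding Fc_def using clamp_in[of x] clamp_in[of y] clamp_mono[of x y] F_mono by auto

lemma Fc_cont: "continuous_on UNIV Fc"
proof -
  have "continuous_on UNIV (clamp vl vh)" unfolding clamp_def by (intro continuous_intros)
  then show ?thesis unfolding Fc_def
    by (rule continuous_on_compose2[OF F_cont]) (use clamp_in in auto)
qed

lemma Fc_low: "x \<le> vl \<Longrightarrow> Fc x = 0" using vlh F_lo by (auto simp: Fc_def clamp_def)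
lemma Fc_high: "vh \<le> x \<Longrightarrow> Fc x = 1" using vlh F_hi by (auto simp: Fc_def clamp_def)

lemma Fc_rc: "continuous (at_right a) Fc"
  using Fc_cont by (simp add: continuous_on_eq_continuous_at continuous_at_imp_continuous_within)

lemma Fc_bot: "(Fc \<longlongrightarrow> 0) at_bot"
proof -
  have "eventually (\<lambda>x. Fc x = 0) at_bot" using Fc_low by (auto simp: eventually_at_bot_linorder)
  thus ?thesis by (rule tendsto_eventually)
qed

lemma Fc_top: "(Fc \<longlongrightarrow> 1) at_top"
proof -
  have "eventually (\<lambda>x. Fc x = 1) at_top" using Fc_high by (auto simp: eventually_at_top_linorder)
  thus ?thesis by (rule tendsto_eventually)
qed

abbreviation "D \<equiv> value_dist vl vh F"

lemma D_eq: "D = interval_measure Fc"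
  unfolding value_dist_def Fc_def[abs_def] ..

lemma D_real: "real_distribution D"
  unfolding D_eq by (rule real_distribution_interval_measure[OF Fc_mono Fc_rc Fc_bot Fc_top])

lemma D_prob: "prob_space D" using D_real by (simp add: real_distribution_def)

lemma D_Ioc: "a \<le> b \<Longrightarrow> measure D {a<..b} = Fc b - Fc a"
  unfolding D_eq by (rule measure_interval_measure_Ioc[OF _ Fc_mono Fc_rc])

lemma D_sing: "emeasure D {z} = 0"
proof -
  have "emeasure D {z..z} = Fc z - Fc z" unfolding D_eq
    by (rule emeasure_interval_measure_Icc[OF _ Fc_mono Fc_cont]) simp
  thus ?thesis by simp
qed

lemma D_AE_range: "AE x in D. x \<in> {vl<..vh}"
proof -
  interpret prob_space D by (rule D_prob)
  have "prob {vl<..vh} = 1" using D_Ioc[of vl vh] vlh Fc_low[of vl] Fc_high[of vh] by simp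
  thus ?thesis by (rule AE_prob_1)
qed

lemma D_AE_ne: "AE x in D. x \<noteq> z"
proof -
  have "{z} \<in> null_sets D" using D_sing by (auto simp: null_sets_def D_eq)
  from AE_not_in[OF this] show ?thesis by simp
qed

abbreviation "\<Omega> \<equiv> others_dist k vl vh F"

lemma Omega_def': "\<Omega> = PiM {..<k} (\<lambda>_. D)" unfolding others_dist_def ..

lemma Omega_prob: "prob_space \<Omega>"
  unfolding Omega_def' by (rule prob_space_PiM) (rule D_prob)

lemma sets_D[measurable_cong]: "sets D = sets borel" unfolding D_eq by simp

lemma comp_meas[measurable]: "j < k \<Longrightarrow> (\<lambda>x. x j) \<in> borel_measurable \<Omega>"
  unfolding Omega_def' by measurable

abbreviation "Y \<equiv> highest_other k"

lemma Y_meas[measurable]: "Y \<in> borel_measurable \<Omega>"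
proof -
  have "(\<lambda>x. Max ((\<lambda>i. x i) ` {..<k})) \<in> borel_measurable \<Omega>"
    by (rule borel_measurable_Max) auto
  thus ?thesis unfolding highest_other_def[abs_def] by simp
qed

lemma AE_good: "AE ths in \<Omega>. \<forall>j\<in>{..<k}. ths j \<in> {vl<..vh} \<and> ths j \<noteq> z"
proof (rule AE_finite_allI)
  fix j assume j: "j \<in> {..<k}"
  have "AE x in D. x \<in> {vl<..vh} \<and> x \<noteq> z" using D_AE_range D_AE_ne by eventually_elim auto
  then show "AE ths in \<Omega>. ths j \<in> {vl<..vh} \<and> ths j \<noteq> z"
    unfolding Omega_def' by (rule AE_PiM_component[OF D_prob j])
qed simp

lemma Y_in: "Y ths \<in> ths ` {..<k}"
  unfolding highest_other_def using k1 by (intro Max_in) (auto simp: lessThan_empty_iff)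

lemma Y_ge: "j < k \<Longrightarrow> ths j \<le> Y ths"
  unfolding highest_other_def by (intro Max_ge) auto

lemma Y_mono_comm: "mono h \<Longrightarrow> highest_other k (\<lambda>j. h (ths j)) = h (Y ths)"
proof -
  assume "mono h"
  have "h (Max (ths ` {..<k})) = Max (h ` ths ` {..<k})"
    by (rule mono_Max_commute[OF \<open>mono h\<close>]) (use k1 in \<open>auto simp: lessThan_empty_iff\<close>)
  thus ?thesis unfolding highest_other_def by (simp add: image_image)
qed

definition G where "G z = measure \<Omega> {ths \<in> space \<Omega>. Y ths < z}"

lemma G_pos: assumes "vl < z" "z \<le> vh" shows "G z > 0"
proof -
  interpret P: product_prob_space "\<lambda>_. D" "{..<k}"
    by (rule product_prob_spaceI) (rule D_prob)
  interpret O: prob_space \<Omega> by (rule Omega_prob)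
  define m where "m = (vl + z)/2"
  have m: "vl < m" "m < z" using assms by (auto simp: m_def)
  have "emeasure \<Omega> {x\<in>space \<Omega>. \<forall>i\<in>{..<k}. x i \<in> {vl<..m}} = (\<Prod>i\<in>{..<k}. emeasure D {vl<..m})"
    unfolding Omega_def' by (rule P.emeasure_PiM_Collect) auto
  also have "\<dots> = ennreal (F m ^ k)"
  proof -
    have "emeasure D {vl<..m} = ennreal (Fc m - Fc vl)"
      unfolding D_eq by (rule emeasure_interval_measure_Ioc[OF _ Fc_mono Fc_rc]) (use m in auto)
    hence "emeasure D {vl<..m} = ennreal (F m)"
      using m Fc_low[of vl] assms by (simp add: Fc_def clamp_id)
    moreover have "F m \<ge> 0" using F_pos[of m] m assms by auto
    ultimately show ?thesis by (simp add: prod_ennreal ennreal_power)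
  qed
  finally have e: "O.prob {x\<in>space \<Omega>. \<forall>i\<in>{..<k}. x i \<in> {vl<..m}} = F m ^ k"
    using F_pos[of m] m assms by (simp add: O.emeasure_eq_measure)
  have sub: "{x\<in>space \<Omega>. \<forall>i\<in>{..<k}. x i \<in> {vl<..m}} \<subseteq> {ths \<in> space \<Omega>. Y ths < z}"
  proof safe
    fix x assume "x \<in> space \<Omega>" "\<forall>i\<in>{..<k}. x i \<in> {vl<..m}"
    moreover obtain j where "j < k" "Y x = x j" using Y_in[of x] by auto
    ultimately show "Y x < z" using m by (metis greaterThanAtMost_iff lessThan_iff order.strict_trans1)
  qed
  have "O.prob {x\<in>space \<Omega>. \<forall>i\<in>{..<k}. x i \<in> {vl<..m}} \<le> G z"
    unfolding G_def by (rule O.finite_measure_mono[OF sub]) measurable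
  moreover have "F m ^ k > 0" using F_pos[of m] m assms by simp
  ultimately show ?thesis using e by simp
qed

lemma card_filter_sum: "real (card {j\<in>{..<k}. P j}) = (\<Sum>j<k. if P j then 1 else 0)"
proof -
  have "real (card {j\<in>{..<k}. P j}) = (\<Sum>j\<in>{j\<in>{..<k}. P j}. (1::real))" by simp
  also have "\<dots> = (\<Sum>j<k. if P j then 1 else 0)" by (rule sum.inter_filter) simp
  finally show ?thesis .
qed

lemma ho_meas:
  assumes "\<And>j. j < k \<Longrightarrow> (\<lambda>x. d x j) \<in> borel_measurable M"
  shows "(\<lambda>x. highest_other k (d x)) \<in> borel_measurable M"
proof -
  have "(\<lambda>x. Max ((\<lambda>i. d x i) ` {..<k})) \<in> borel_measurable M"
    by (rule borel_measurable_Max) (use assms in auto)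
  thus ?thesis unfolding highest_other_def by simp
qed

lemma wp_meas:
  assumes [measurable]: "\<And>j. j < k \<Longrightarrow> (\<lambda>x. d x j) \<in> borel_measurable M"
  shows "(\<lambda>x. win_prob k b (d x)) \<in> borel_measurable M"
proof -
  have [measurable]: "(\<lambda>x. highest_other k (d x)) \<in> borel_measurable M" by (rule ho_meas) fact
  have [measurable]: "(\<lambda>x. real (card {j\<in>{..<k}. d x j = b})) \<in> borel_measurable M"
    unfolding card_filter_sum by measurable
  show ?thesis unfolding win_prob_def by measurable
qed

lemma h_mono: fixes \<beta> :: "real \<Rightarrow> real" assumes "strict_mono_on {vl..vh} \<beta>" shows "mono (\<lambda>x. \<beta> (clamp vl vh x))"
proof
  fix x y :: real assume "x \<le> y"
  thus "\<beta> (clamp vl vh x) \<le> \<beta> (clamp vl vh y)"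
    using clamp_in[of x] clamp_in[of y] clamp_mono[of x y] strict_mono_on_leD[OF assms] by blast
qed

lemma h_meas[measurable]: fixes \<beta> :: "real \<Rightarrow> real" assumes "strict_mono_on {vl..vh} \<beta>"
  shows "(\<lambda>x. \<beta> (clamp vl vh x)) \<in> borel_measurable borel"
  by (rule borel_measurable_mono[OF h_mono[OF assms]])

lemma wp_AE: fixes \<beta> :: "real \<Rightarrow> real"
  assumes sm: "strict_mono_on {vl..vh} \<beta>" and z: "z \<in> {vl..vh}"
  shows "AE ths in \<Omega>. win_prob k (\<beta> z) (\<lambda>j. \<beta> (clamp vl vh (ths j))) = indicator {ths. Y ths < z} ths"
  using AE_good[of z]
proof eventually_elim
  case (elim ths)
  obtain j where j: "j < k" "Y ths = ths j" using Y_in[of ths] by auto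
  have "ths j \<in> {vl<..vh}" "ths j \<noteq> z" using elim j by auto
  hence Yr: "Y ths \<in> {vl..vh}" "Y ths \<noteq> z" using j by auto
  have ho: "highest_other k (\<lambda>j. \<beta> (clamp vl vh (ths j))) = \<beta> (Y ths)"
    using Y_mono_comm[OF h_mono[OF sm], of ths] clamp_id[OF Yr(1)] by simp
  show ?case
  proof (cases "Y ths < z")
    case True
    hence "\<beta> (Y ths) < \<beta> z" using strict_mono_onD[OF sm Yr(1) z] by simp
    thus ?thesis using True ho by (simp add: win_prob_def)
  next
    case False
    hence "z < Y ths" using Yr by simp
    hence "\<beta> z < \<beta> (Y ths)" using strict_mono_onD[OF sm z Yr(1)] by simp
    thus ?thesis using False ho by (simp add: win_prob_def)
  qed
qed

lemma ind_meas[measurable]: "(\<lambda>ths. indicator {ths. Y ths < z} ths :: real) \<in> borel_measurable \<Omega>"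
proof -
  have "{ths. Y ths < z} \<inter> space \<Omega> \<in> sets \<Omega>"
    using Y_meas by (simp add: Int_commute) measurable
  hence "(indicator ({ths. Y ths < z} \<inter> space \<Omega>) :: _ \<Rightarrow> real) \<in> borel_measurable \<Omega>" by simp
  thus ?thesis by (rule measurable_cong[THEN iffD1, rotated]) (auto simp: indicator_def)
qed

lemma int_ind: "(\<integral>ths. indicator {ths. Y ths < z} ths \<partial>\<Omega>) = G z"
proof -
  have "{ths. Y ths < z} \<inter> space \<Omega> = {ths \<in> space \<Omega>. Y ths < z}" by auto
  thus ?thesis unfolding G_def integral_indicator by simp
qed

lemma EU_gen: fixes \<beta> :: "real \<Rightarrow> real"
  assumes sm: "strict_mono_on {vl..vh} \<beta>" and z: "z \<in> {vl..vh}"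
    and Pm: "P \<in> borel_measurable \<Omega>" and Pb: "\<And>ths. \<bar>P ths\<bar> \<le> B"
  shows "(\<integral>ths. win_prob k (\<beta> z) (\<lambda>j. \<beta> (clamp vl vh (ths j))) * (t - P ths) \<partial>\<Omega>)
       = t * G z - (\<integral>ths. indicator {ths. Y ths < z} ths * P ths \<partial>\<Omega>)"
proof -
  interpret O: prob_space \<Omega> by (rule Omega_prob)
  have B0: "0 \<le> B" using Pb[of undefined] by linarith
  have dm: "\<And>j. j < k \<Longrightarrow> (\<lambda>x. \<beta> (clamp vl vh (x j))) \<in> borel_measurable \<Omega>"
    using h_meas[OF sm] by measurable
  have [measurable]: "(\<lambda>x. win_prob k (\<beta> z) (\<lambda>j. \<beta> (clamp vl vh (x j)))) \<in> borel_measurable \<Omega>"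
    by (rule wp_meas) (rule dm)
  note Pm[measurable]
  have "(\<integral>ths. win_prob k (\<beta> z) (\<lambda>j. \<beta> (clamp vl vh (ths j))) * (t - P ths) \<partial>\<Omega>)
      = (\<integral>ths. t * indicator {ths. Y ths < z} ths - indicator {ths. Y ths < z} ths * P ths \<partial>\<Omega>)"
    by (rule integral_cong_AE) (measurable, use wp_AE[OF sm z] in \<open>auto simp: algebra_simps elim: AE_mp\<close>)
  also have "\<dots> = (\<integral>ths. t * indicator {ths. Y ths < z} ths \<partial>\<Omega>) - (\<integral>ths. indicator {ths. Y ths < z} ths * P ths \<partial>\<Omega>)"
  proof (rule Bochner_Integration.integral_diff)
    show "integrable \<Omega> (\<lambda>ths. t * indicator {ths. Y ths < z} ths)"
      by (rule O.integrable_const_bound[where B="\<bar>t\<bar>"]) (auto simp: indicator_def)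
    show "integrable \<Omega> (\<lambda>ths. indicator {ths. Y ths < z} ths * P ths)"
      by (rule O.integrable_const_bound[where B="B"]) (use Pb B0 in \<open>auto simp: indicator_def\<close>)
  qed
  also have "(\<integral>ths. t * indicator {ths. Y ths < z} ths \<partial>\<Omega>) = t * G z"
    by (simp only: integral_mult_right_zero int_ind)
  finally show ?thesis .
qed

definition N where "N t = (\<integral>ths. Y ths * indicator {ths. Y ths < t} ths \<partial>\<Omega>)"

lemma AE_Y: "AE ths in \<Omega>. vl < Y ths \<and> Y ths \<le> vh"
  using AE_good[of 0]
proof eventually_elim
  case (elim ths)
  obtain j where j: "j < k" "Y ths = ths j" using Y_in[of ths] by auto
  thus ?case using elim by auto
qed

lemma int_YI: "integrable \<Omega> (\<lambda>ths. Y ths * indicator {ths. Y ths < t} ths)"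
proof -
  interpret O: prob_space \<Omega> by (rule Omega_prob)
  show ?thesis
  proof (rule O.integrable_const_bound[where B=vh])
    show "AE x in \<Omega>. norm (Y x * indicator {ths. Y ths < t} x) \<le> vh"
      using AE_Y by eventually_elim (use vl0 vlh in \<open>auto simp: indicator_def\<close>)
  qed measurable
qed

lemma int_I: "integrable \<Omega> (\<lambda>ths. indicator {ths. Y ths < t} ths :: real)"
proof -
  interpret O: prob_space \<Omega> by (rule Omega_prob)
  show ?thesis by (rule O.integrable_const_bound[where B=1]) (auto simp: indicator_def)
qed

lemma N_squeeze:
  assumes "z \<le> t"
  shows "(t - z) * G z \<le> (t * G t - N t) - (z * G z - N z) \<and> (t * G t - N t) - (z * G z - N z) \<le> (t - z) * G t"
proof -
  let ?I = "\<lambda>t ths. indicator {ths. Y ths < t} ths :: real"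
  have eqN: "N t - N z = (\<integral>ths. Y ths * ?I t ths - Y ths * ?I z ths \<partial>\<Omega>)"
    unfolding N_def by (rule Bochner_Integration.integral_diff[symmetric]) (rule int_YI)+
  have "(\<integral>ths. z * ?I t ths - z * ?I z ths \<partial>\<Omega>) = (\<integral>ths. z * ?I t ths \<partial>\<Omega>) - (\<integral>ths. z * ?I z ths \<partial>\<Omega>)"
    by (rule Bochner_Integration.integral_diff) (intro integrable_mult_right int_I)+
  also have "\<dots> = z * G t - z * G z" by (simp only: integral_mult_right_zero int_ind)
  finally have eqz: "z * (G t - G z) = (\<integral>ths. z * ?I t ths - z * ?I z ths \<partial>\<Omega>)"
    by (simp add: algebra_simps)
  have "(\<integral>ths. t * ?I t ths - t * ?I z ths \<partial>\<Omega>) = (\<integral>ths. t * ?I t ths \<partial>\<Omega>) - (\<integral>ths. t * ?I z ths \<partial>\<Omega>)"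
    by (rule Bochner_Integration.integral_diff) (intro integrable_mult_right int_I)+
  also have "\<dots> = t * G t - t * G z" by (simp only: integral_mult_right_zero int_ind)
  finally have eqt: "t * (G t - G z) = (\<integral>ths. t * ?I t ths - t * ?I z ths \<partial>\<Omega>)"
    by (simp add: algebra_simps)
  have iY: "integrable \<Omega> (\<lambda>ths. Y ths * ?I t ths - Y ths * ?I z ths)"
    by (intro Bochner_Integration.integrable_diff int_YI)
  have iz: "integrable \<Omega> (\<lambda>ths. c * ?I t ths - c * ?I z ths)" for c
    by (intro Bochner_Integration.integrable_diff integrable_mult_right int_I)
  have "z * (G t - G z) \<le> N t - N z"
    unfolding eqN eqz
    by (rule integral_mono[OF iz iY]) (auto simp: indicator_def)
  moreover have "N t - N z \<le> t * (G t - G z)"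
    unfolding eqN eqt
    by (rule integral_mono[OF iY iz]) (use assms in \<open>auto simp: indicator_def\<close>)
  ultimately show ?thesis by (simp add: algebra_simps)
qed

lemma N_vl: "N vl = 0"
  unfolding N_def by (rule integral_eq_zero_AE) (use AE_Y in \<open>auto simp: indicator_def elim: AE_mp\<close>)

lemma M_vl: fixes P :: "_ \<Rightarrow> real" shows "(\<integral>ths. indicator {ths. Y ths < vl} ths * P ths \<partial>\<Omega>) = 0"
  by (rule integral_eq_zero_AE) (use AE_Y in \<open>eventually_elim, auto simp: indicator_def\<close>)

lemma G_mono: "x \<le> y \<Longrightarrow> G x \<le> G y"
proof -
  interpret O: prob_space \<Omega> by (rule Omega_prob)
  assume "x \<le> y"
  thus ?thesis unfolding G_def by (intro O.finite_measure_mono) auto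
qed


lemma eq_M_N:
  fixes \<beta> :: "real \<Rightarrow> real" and p :: "real \<Rightarrow> (nat \<Rightarrow> real) \<Rightarrow> real"
    and u :: "real \<Rightarrow> real \<Rightarrow> (nat \<Rightarrow> real) \<Rightarrow> real"
  assumes sm: "strict_mono_on {vl..vh} \<beta>"
    and eq: "\<forall>th\<in>{vl..vh}. \<forall>b\<ge>0. expected_util u k vl vh F \<beta> th b \<le> expected_util u k vl vh F \<beta> th (\<beta> th)"
    and nn: "\<forall>th\<in>{vl..vh}. 0 \<le> \<beta> th"
    and uf: "\<And>th b d. u th b d = win_prob k b d * (th - p b d)"
    and pm: "\<And>z. z \<in> {vl..vh} \<Longrightarrow> (\<lambda>ths. p (\<beta> z) (\<lambda>j. \<beta> (clamp vl vh (ths j)))) \<in> borel_measurable \<Omega>"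
    and pb: "\<And>z. z \<in> {vl..vh} \<Longrightarrow> \<exists>B. \<forall>ths. \<bar>p (\<beta> z) (\<lambda>j. \<beta> (clamp vl vh (ths j)))\<bar> \<le> B"
    and th: "th \<in> {vl..vh}"
  shows "(\<integral>ths. indicator {ths. Y ths < th} ths * p (\<beta> th) (\<lambda>j. \<beta> (clamp vl vh (ths j))) \<partial>\<Omega>) = N th"
proof -
  define M where "M z = (\<integral>ths. indicator {ths. Y ths < z} ths * p (\<beta> z) (\<lambda>j. \<beta> (clamp vl vh (ths j))) \<partial>\<Omega>)" for z
  have EU: "expected_util u k vl vh F \<beta> t (\<beta> z) = t * G z - M z" if z: "z \<in> {vl..vh}" for t z
  proof -
    obtain B where B: "\<forall>ths. \<bar>p (\<beta> z) (\<lambda>j. \<beta> (clamp vl vh (ths j)))\<bar> \<le> B" using pb[OF z] by blast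
    show ?thesis unfolding expected_util_def uf M_def others_dist_def[symmetric]
      by (rule EU_gen[OF sm z pm[OF z]]) (use B in auto)
  qed
  define U where "U t = t * G t - M t" for t
  define V where "V t = t * G t - N t" for t
  have "U th = V th"
  proof (rule envelope_unique[where G=G and a=vl and b=th and U=U and V=V])
    show "vl \<le> th" using th by auto
    show "G x \<le> G y" if "vl \<le> x" "x \<le> y" "y \<le> th" for x y using G_mono that by auto
    show "(t-z) * G z \<le> U t - U z \<and> U t - U z \<le> (t-z) * G t" if "vl \<le> z" "z \<le> t" "t \<le> th" for z t
    proof -
      have zi: "z \<in> {vl..vh}" "t \<in> {vl..vh}" using that th by auto
      have h1: "expected_util u k vl vh F \<beta> t (\<beta> z) \<le> expected_util u k vl vh F \<beta> t (\<beta> t)"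
        using eq zi nn by auto
      have h2: "expected_util u k vl vh F \<beta> z (\<beta> t) \<le> expected_util u k vl vh F \<beta> z (\<beta> z)"
        using eq zi nn by auto
      show ?thesis using h1 h2 unfolding EU[OF zi(1)] EU[OF zi(2)] U_def
        by (simp add: algebra_simps)
    qed
    show "(t-z) * G z \<le> V t - V z \<and> V t - V z \<le> (t-z) * G t" if "vl \<le> z" "z \<le> t" "t \<le> th" for z t
      using N_squeeze[OF that(2)] unfolding V_def by simp
    show "U vl = V vl" unfolding U_def V_def M_def using M_vl N_vl by simp
  qed
  thus ?thesis unfolding U_def V_def M_def by simp
qed

end

theorem proposition2:
  fixes n :: nat and vl vh :: real and F c :: "real \<Rightarrow> real" and \<gamma> :: real
    and bFP bNCSP bCSP :: "real \<Rightarrow> real"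
  assumes n: "n \<ge> 2"
    and vals: "0 \<le> vl" "vl < vh"
    and F_lo: "F vl = 0" and F_hi: "F vh = 1"
    and F_strict: "strict_mono_on {vl<..<vh} F"
    and F_C1: "\<exists>f. continuous_on {vl..vh} f \<and>
                  (\<forall>x\<in>{vl..vh}. (F has_real_derivative f x) (at x within {vl..vh}))"
    and c_diff: "\<forall>x. c differentiable (at x)"
    and c_convex: "convex_on UNIV c"
    and c_incr: "strict_mono_on {0..} c"
    and c_decr: "\<forall>x y. x < y \<and> y < 0 \<longrightarrow> c y < c x"
    and c_zero: "c 0 = 0"
    and c_deriv0: "deriv c 0 \<le> 1"
    and gamma_pos: "\<gamma> > 0"
    and gamma_def: "deriv c \<gamma> = 1"
    and eqFP: "sym_equilibrium (util_FP (n - 1)) (n - 1) vl vh F bFP"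
    and eqNCSP: "sym_equilibrium (util_NCSP \<gamma> (n - 1)) (n - 1) vl vh F bNCSP"
    and eqCSP: "sym_equilibrium (util_CSP (n - 1)) (n - 1) vl vh F bCSP"
    and th: "th \<in> {vl<..vh}"
  shows "cond_exp_max_below (n - 1) vl vh F th = bFP th \<and>
         bFP th \<le> bNCSP th \<and> bNCSP th < bCSP th \<and> bCSP th = th"
  proof -
  define k where "k = n - 1"
  have k1: "1 \<le> k" using n by (simp add: k_def)
  obtain f where f: "continuous_on {vl..vh} f" "\<forall>x\<in>{vl..vh}. (F has_real_derivative f x) (at x within {vl..vh})"
    using F_C1 by blast
  have Fc: "continuous_on {vl..vh} F" by (rule DERIV_continuous_on) (use f(2) in blast)
  interpret auc vl vh F k
    by unfold_locales (use vals F_lo F_hi F_strict Fc k1 in auto)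
  have thI: "th \<in> {vl..vh}" and th0: "0 < th" using th vals by auto
  have Gp: "G th > 0" using G_pos th by auto
  note eF = eqFP[unfolded sym_equilibrium_def k_def[symmetric]]
  note eN = eqNCSP[unfolded sym_equilibrium_def k_def[symmetric]]
  note eC = eqCSP[unfolded sym_equilibrium_def k_def[symmetric]]
  have CSP: "bCSP th = th"
    by (rule CSP_truth[OF k1]) (use eC thI th0 in auto)
  have NCSP: "bNCSP th < th"
    by (rule NCSP_below[OF k1 _ th0 gamma_pos]) (use eN thI in auto)
  have "(\<integral>ths. indicator {ths. Y ths < th} ths * bFP th \<partial>\<Omega>) = N th"
    by (rule eq_M_N[where u="util_FP k" and p="\<lambda>b d. b", OF _ _ _ _ _ _ thI])
       (use eF in \<open>auto simp: util_FP_def\<close>)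
  moreover have "(\<integral>ths. indicator {ths. Y ths < th} ths * bFP th \<partial>\<Omega>) = bFP th * G th"
    by (simp only: integral_mult_left_zero int_ind, simp)
  ultimately have FPe: "bFP th * G th = N th" by simp
  have FP: "cond_exp_max_below (n - 1) vl vh F th = bFP th"
  proof -
    have "cond_exp_max_below k vl vh F th = N th / G th"
      unfolding cond_exp_max_below_def N_def G_def ..
    hence "cond_exp_max_below (n - 1) vl vh F th = N th / G th" by (simp only: k_def)
    moreover have "N th / G th = bFP th" using FPe Gp by (simp add: divide_simps)
    ultimately show ?thesis by simp
  qed
  have smN: "strict_mono_on {vl..vh} bNCSP" using eN by auto
  note hmN[measurable] = h_meas[OF smN]
  have hoN: "highest_other k (\<lambda>j. bNCSP (clamp vl vh (ths j))) = bNCSP (clamp vl vh (Y ths))" for ths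
    using Y_mono_comm[OF h_mono[OF smN], of ths] by simp
  have lowN: "bNCSP vl \<le> bNCSP (clamp vl vh x)" for x
    using strict_mono_on_leD[OF smN, of vl "clamp vl vh x"] clamp_in[of x] vals by auto
  let ?P = "\<lambda>ths. min (bNCSP th) (bNCSP (clamp vl vh (Y ths)) + \<gamma>)"
  have Pm: "?P \<in> borel_measurable \<Omega>" by measurable
  have Pb: "\<bar>?P ths\<bar> \<le> \<bar>bNCSP th\<bar> + \<bar>bNCSP vl\<bar> + \<gamma>" for ths
    using lowN[of "Y ths"] gamma_pos by (auto simp: abs_if min_def)
  have MN: "(\<integral>ths. indicator {ths. Y ths < th} ths * ?P ths \<partial>\<Omega>) = N th"
  proof -
    have "(\<integral>ths. indicator {ths. Y ths < th} ths * min (bNCSP th) (highest_other k (\<lambda>j. bNCSP (clamp vl vh (ths j))) + \<gamma>) \<partial>\<Omega>) = N th"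
    proof (rule eq_M_N[where u="util_NCSP \<gamma> k" and p="\<lambda>b d. min b (highest_other k d + \<gamma>)", OF _ _ _ _ _ _ thI])
      fix z assume z: "z \<in> {vl..vh}"
      show "(\<lambda>ths. min (bNCSP z) (highest_other k (\<lambda>j. bNCSP (clamp vl vh (ths j))) + \<gamma>)) \<in> borel_measurable \<Omega>"
        unfolding hoN by measurable
      show "\<exists>B. \<forall>ths. \<bar>min (bNCSP z) (highest_other k (\<lambda>j. bNCSP (clamp vl vh (ths j))) + \<gamma>)\<bar> \<le> B"
        unfolding hoN
      proof (intro exI allI)
        fix ths
        show "\<bar>min (bNCSP z) (bNCSP (clamp vl vh (Y ths)) + \<gamma>)\<bar> \<le> \<bar>bNCSP z\<bar> + \<bar>bNCSP vl\<bar> + \<gamma>"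
          using lowN[of "Y ths"] gamma_pos by (auto simp: abs_if min_def)
      qed
    qed (use eN in \<open>auto simp: util_NCSP_def\<close>)
    thus ?thesis unfolding hoN .
  qed
  have "(\<integral>ths. indicator {ths. Y ths < th} ths * ?P ths \<partial>\<Omega>) \<le> (\<integral>ths. indicator {ths. Y ths < th} ths * bNCSP th \<partial>\<Omega>)"
  proof (rule integral_mono)
    interpret O: prob_space \<Omega> by (rule Omega_prob)
    show "integrable \<Omega> (\<lambda>ths. indicator {ths. Y ths < th} ths * ?P ths)"
      by (rule O.integrable_const_bound[where B="\<bar>bNCSP th\<bar> + \<bar>bNCSP vl\<bar> + \<gamma>"])
         (use Pb gamma_pos in \<open>auto simp: indicator_def intro!: AE_I2\<close>, use Pm in measurable)
    show "integrable \<Omega> (\<lambda>ths. indicator {ths. Y ths < th} ths * bNCSP th)"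
      by (intro integrable_mult_left int_I)
  qed (auto simp: indicator_def)
  hence "N th \<le> bNCSP th * G th"
    unfolding MN by (simp only: integral_mult_left_zero int_ind, simp add: mult.commute)
  hence "bFP th * G th \<le> bNCSP th * G th" using FPe by simp
  hence "bFP th \<le> bNCSP th" using Gp by simp
  with FP CSP NCSP show ?thesis by simp
qed

end
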